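(* Let $\mathcal X,\mathcal U$ be finite nonempty sets, $f:\mathcal X\times\mathcal U\to\mathcal X$ and $\ell,g:\mathcal X\to\mathbb R$. Let $V_{\mathrm A}^*(x)=\max_{\pi\in\Pi}\min_{\tau\in\mathbb N}g(\xi_x^\pi(\tau))$, $\tilde\ell(x)=\min\{\ell(x),V_{\mathrm A}^*(x)\}$, $$\tilde v_{\mathrm{RA}}^*(x)=\max_{\mathbf u\in\mathbb U}\max_{\tau\in\mathbb N}\min\Big\{\tilde\ell(\xi_x^{\mathbf u}(\tau)),\min_{\kappa\le\tau}g(\xi_x^{\mathbf u}(\kappa))\Big\},$$ $$v_{\mathrm{RAA}}^*(x)=\max_{\mathbf u\in\mathbb U}\min\Big\{\max_{\tau\in\mathbb N}\ell(\xi_x^{\mathbf u}(\tau)),\min_{\kappa\in\mathbb N}g(\xi_x^{\mathbf u}(\kappa))\Big\}.$$ Then $v_{\mathrm{RAA}}^*(x)=\tilde v_{\mathrm{RA}}^*(x)$ for every $x\in\mathcal X$.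
   Context: $\mathbb N=\{0,1,\dots\}$; $\Pi$ is the set of maps $\mathcal X\to\mathcal U$; $\mathbb U$ is the set of sequences $\mathbb N\to\mathcal U$. For $\pi\in\Pi$: $\xi_x^\pi(0)=x$, $\xi_x^\pi(t+1)=f(\xi_x^\pi(t),\pi(\xi_x^\pi(t)))$. For $\mathbf u\in\mathbb U$: $\xi_x^{\mathbf u}(0)=x$, $\xi_x^{\mathbf u}(t+1)=f(\xi_x^{\mathbf u}(t),\mathbf u(t))$. *)

theory Defs
  imports Complex_Main
begin

primrec traj_pol :: "('x \<Rightarrow> 'u \<Rightarrow> 'x) \<Rightarrow> ('x \<Rightarrow> 'u) \<Rightarrow> 'x \<Rightarrow> nat \<Rightarrow> 'x" where
  "traj_pol f p x 0 = x"
| "traj_pol f p x (Suc t) = f (traj_pol f p x t) (p (traj_pol f p x t))"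

primrec traj_seq :: "('x \<Rightarrow> 'u \<Rightarrow> 'x) \<Rightarrow> (nat \<Rightarrow> 'u) \<Rightarrow> 'x \<Rightarrow> nat \<Rightarrow> 'x" where
  "traj_seq f u x 0 = x"
| "traj_seq f u x (Suc t) = f (traj_seq f u x t) (u t)"

definition VA :: "('x \<Rightarrow> 'u \<Rightarrow> 'x) \<Rightarrow> ('x \<Rightarrow> real) \<Rightarrow> 'x \<Rightarrow> real" where
  "VA f g x = Max (range (\<lambda>p. Min (range (\<lambda>\<tau>. g (traj_pol f p x \<tau>)))))"

definition ell_tilde :: "('x \<Rightarrow> 'u \<Rightarrow> 'x) \<Rightarrow> ('x \<Rightarrow> real) \<Rightarrow> ('x \<Rightarrow> real) \<Rightarrow> 'x \<Rightarrow> real" where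
  "ell_tilde f l g x = min (l x) (VA f g x)"

definition vRA_tilde :: "('x \<Rightarrow> 'u \<Rightarrow> 'x) \<Rightarrow> ('x \<Rightarrow> real) \<Rightarrow> ('x \<Rightarrow> real) \<Rightarrow> 'x \<Rightarrow> real" where
  "vRA_tilde f l g x = Max (range (\<lambda>u::nat \<Rightarrow> 'u. Max (range (\<lambda>\<tau>.
      min (ell_tilde f l g (traj_seq f u x \<tau>))
          (Min ((\<lambda>\<kappa>. g (traj_seq f u x \<kappa>)) ` {..\<tau>}))))))"

definition vRAA :: "('x \<Rightarrow> 'u \<Rightarrow> 'x) \<Rightarrow> ('x \<Rightarrow> real) \<Rightarrow> ('x \<Rightarrow> real) \<Rightarrow> 'x \<Rightarrow> real" where
  "vRAA f l g x = Max (range (\<lambda>u::nat \<Rightarrow> 'u.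
      min (Max (range (\<lambda>\<tau>. l (traj_seq f u x \<tau>))))
          (Min (range (\<lambda>\<kappa>. g (traj_seq f u x \<kappa>))))))"

end

theory Submission
  imports Defs
begin

lemma fin_rng: "finite (range (\<lambda>t. (h::'x::finite \<Rightarrow> 'b) (F t)))"
  by (rule finite_subset[of _ "range h"]) auto

lemma traj_seq_shift:
  "traj_seq f u x (\<tau> + t) = traj_seq f (\<lambda>s. u (\<tau> + s)) (traj_seq f u x \<tau>) t"
  by (induction t) auto

lemma traj_seq_prefix:
  "\<forall>s<\<tau>. u' s = u s \<Longrightarrow> t \<le> \<tau> \<Longrightarrow> traj_seq f u' x t = traj_seq f u x t"
  by (induction t) auto

lemma traj_seq_pol:
  "\<forall>s. w s = p (traj_pol f p y s) \<Longrightarrow> traj_seq f w y t = traj_pol f p y t"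
  by (induction t) auto

lemma Min_g_in: "Min (range (\<lambda>t. (g::'x::finite \<Rightarrow> real) (F t))) \<in> range g"
proof -
  have "Min (range (\<lambda>t. g (F t))) \<in> range (\<lambda>t. g (F t))"
    by (rule Min_in) (auto simp: fin_rng)
  then show ?thesis by auto
qed

lemma VA_attained:
  fixes f :: "'x::finite \<Rightarrow> 'u::finite \<Rightarrow> 'x"
  obtains p where "VA f g y = Min (range (\<lambda>\<tau>. g (traj_pol f p y \<tau>)))"
proof -
  have fin: "finite (range (\<lambda>p::'x \<Rightarrow> 'u. Min (range (\<lambda>\<tau>. g (traj_pol f p y \<tau>)))))"
    by (rule finite_subset[of _ "range g"]) (auto intro: Min_g_in)
  have "VA f g y \<in> range (\<lambda>p::'x \<Rightarrow> 'u. Min (range (\<lambda>\<tau>. g (traj_pol f p y \<tau>))))"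
    unfolding VA_def by (rule Max_in[OF fin]) auto
  then show ?thesis using that by auto
qed

lemma VA_lower:
  fixes f :: "'x::finite \<Rightarrow> 'u::finite \<Rightarrow> 'x"
  assumes "\<forall>t. g (traj_seq f w y t) \<ge> c"
  shows "VA f g y \<ge> c"
proof -
  define S where "S = {z. \<exists>w. \<forall>t. g (traj_seq f w z t) \<ge> c}"
  define p where "p = (\<lambda>z. SOME a. f z a \<in> S)"
  have step: "f z (p z) \<in> S" if "z \<in> S" for z
  proof -
    from that obtain w where w: "\<forall>t. g (traj_seq f w z t) \<ge> c" unfolding S_def by auto
    have "\<forall>t. g (traj_seq f (\<lambda>s. w (Suc s)) (f z (w 0)) t) \<ge> c"
    proof
      fix t
      have "traj_seq f w z (1 + t) = traj_seq f (\<lambda>s. w (1 + s)) (traj_seq f w z 1) t"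
        by (rule traj_seq_shift)
      then have "traj_seq f w z (Suc t) = traj_seq f (\<lambda>s. w (Suc s)) (f z (w 0)) t"
        by simp
      then show "g (traj_seq f (\<lambda>s. w (Suc s)) (f z (w 0)) t) \<ge> c" using w by metis
    qed
    then have "f z (w 0) \<in> S" unfolding S_def by blast
    then show ?thesis unfolding p_def by (rule someI)
  qed
  have yS: "y \<in> S" using assms unfolding S_def by blast
  have inS: "traj_pol f p y t \<in> S" for t
  proof (induction t)
    case 0 then show ?case using yS by simp
  next
    case (Suc t) then show ?case using step by simp
  qed
  have ge: "g z \<ge> c" if "z \<in> S" for z
  proof -
    from that obtain w where "\<forall>t. g (traj_seq f w z t) \<ge> c" unfolding S_def by blast
    then have "g (traj_seq f w z 0) \<ge> c" by blast
    then show ?thesis by simp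
  qed
  have fin1: "finite (range (\<lambda>\<tau>. g (traj_pol f p y \<tau>)))" by (rule fin_rng)
  have "Min (range (\<lambda>\<tau>. g (traj_pol f p y \<tau>))) \<ge> c"
    using fin1 inS ge by (simp add: Min_ge_iff)
  also have "Min (range (\<lambda>\<tau>. g (traj_pol f p y \<tau>))) \<le> VA f g y"
  proof -
    have fin: "finite (range (\<lambda>p::'x \<Rightarrow> 'u. Min (range (\<lambda>\<tau>. g (traj_pol f p y \<tau>)))))"
      by (rule finite_subset[of _ "range g"]) (auto intro: Min_g_in)
    show ?thesis unfolding VA_def by (rule Max_ge[OF fin]) simp
  qed
  finally show ?thesis .
qed

theorem mainTheorem8:
  fixes f :: "'x::finite \<Rightarrow> 'u::finite \<Rightarrow> 'x"
    and l g :: "'x \<Rightarrow> real"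
  shows "\<forall>x. vRAA f l g x = vRA_tilde f l g x"
proof
  fix x
  define L where "L = (\<lambda>u. Max (range (\<lambda>\<tau>. l (traj_seq f u x \<tau>))))"
  define G where "G = (\<lambda>u. Min (range (\<lambda>\<kappa>. g (traj_seq f u x \<kappa>))))"
  define H where "H = (\<lambda>u \<tau>. min (ell_tilde f l g (traj_seq f u x \<tau>))
          (Min ((\<lambda>\<kappa>. g (traj_seq f u x \<kappa>)) ` {..\<tau>})))"
  have A: "vRAA f l g x = Max (range (\<lambda>u. min (L u) (G u)))"
    unfolding vRAA_def L_def G_def by simp
  have B: "vRA_tilde f l g x = Max (range (\<lambda>u. Max (range (H u))))"
    unfolding vRA_tilde_def H_def by simp
  have Lin: "L u \<in> range l" for u
  proof -
    have "L u \<in> range (\<lambda>\<tau>. l (traj_seq f u x \<tau>))" unfolding L_def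
      by (rule Max_in) (auto simp: fin_rng)
    then show ?thesis by auto
  qed
  have Gin: "G u \<in> range g" for u unfolding G_def by (rule Min_g_in)
  have finA: "finite (range (\<lambda>u. min (L u) (G u)))"
    apply (rule finite_subset[of _ "range l \<union> range g"])
    using Lin Gin by (auto simp: min_def) 
  have Hin: "H u \<tau> \<in> range (ell_tilde f l g) \<union> range g" for u \<tau>
  proof -
    have "Min ((\<lambda>\<kappa>. g (traj_seq f u x \<kappa>)) ` {..\<tau>}) \<in> (\<lambda>\<kappa>. g (traj_seq f u x \<kappa>)) ` {..\<tau>}"
      by (rule Min_in) auto
    then have "Min ((\<lambda>\<kappa>. g (traj_seq f u x \<kappa>)) ` {..\<tau>}) \<in> range g" by (metis (no_types, lifting) imageE rangeI)
    then show ?thesis unfolding H_def min_def by auto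
  qed
  have finH: "finite (range (H u))" for u
    by (rule finite_subset[of _ "range (ell_tilde f l g) \<union> range g"]) (use Hin in auto)
  have MHin: "Max (range (H u)) \<in> range (ell_tilde f l g) \<union> range g" for u
  proof -
    have "Max (range (H u)) \<in> range (H u)" by (rule Max_in[OF finH]) auto
    then obtain t where "Max (range (H u)) = H u t" by blast
    then show ?thesis using Hin[of u t] by simp
  qed
  have finB: "finite (range (\<lambda>u. Max (range (H u))))"
    by (rule finite_subset[of _ "range (ell_tilde f l g) \<union> range g"]) (use MHin in auto)
  show "vRAA f l g x = vRA_tilde f l g x"
  proof (rule antisym)
    show "vRAA f l g x \<le> vRA_tilde f l g x"
      unfolding A B
    proof (subst Max_le_iff[OF finA], simp, clarify)
      fix u
      have "L u \<in> range (\<lambda>\<tau>. l (traj_seq f u x \<tau>))" unfolding L_def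
        by (rule Max_in) (auto simp: fin_rng)
      then obtain \<tau> where tau: "L u = l (traj_seq f u x \<tau>)" by auto
      have Gle: "G u \<le> g (traj_seq f u x k)" for k
        unfolding G_def by (rule Min_le) (auto simp: fin_rng)
      have "\<forall>t. g (traj_seq f (\<lambda>s. u (\<tau> + s)) (traj_seq f u x \<tau>) t) \<ge> G u"
        using Gle traj_seq_shift by metis
      then have VAge: "VA f g (traj_seq f u x \<tau>) \<ge> G u" by (rule VA_lower)
      have "Min ((\<lambda>\<kappa>. g (traj_seq f u x \<kappa>)) ` {..\<tau>}) \<ge> G u"
        using Gle by (subst Min_ge_iff) auto
      then have "min (L u) (G u) \<le> H u \<tau>"
        unfolding H_def ell_tilde_def using tau VAge by linarith
      also have "H u \<tau> \<le> Max (range (H u))" by (rule Max_ge[OF finH]) auto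
      also have "\<dots> \<le> Max (range (\<lambda>u. Max (range (H u))))" by (rule Max_ge[OF finB]) auto
      finally show "min (L u) (G u) \<le> Max (range (\<lambda>u. Max (range (H u))))" .
    qed
    show "vRA_tilde f l g x \<le> vRAA f l g x"
      unfolding A B
    proof (subst Max_le_iff[OF finB], simp, clarify)
      fix u
      show "Max (range (H u)) \<le> Max (range (\<lambda>u. min (L u) (G u)))"
      proof (subst Max_le_iff[OF finH], simp, clarify)
        fix \<tau>
        define y where "y = traj_seq f u x \<tau>"
        obtain p where p: "VA f g y = Min (range (\<lambda>t. g (traj_pol f p y t)))"
          using VA_attained by blast
        define u' where "u' = (\<lambda>s. if s < \<tau> then u s else p (traj_pol f p y (s - \<tau>)))"
        have pre: "traj_seq f u' x t = traj_seq f u x t" if "t \<le> \<tau>" for t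
          by (rule traj_seq_prefix) (use that in \<open>auto simp: u'_def\<close>)
        have post: "traj_seq f u' x (\<tau> + t) = traj_pol f p y t" for t
        proof -
          have "traj_seq f u' x (\<tau> + t) = traj_seq f (\<lambda>s. u' (\<tau> + s)) (traj_seq f u' x \<tau>) t"
            by (rule traj_seq_shift)
          also have "\<dots> = traj_seq f (\<lambda>s. u' (\<tau> + s)) y t" using pre[of \<tau>] y_def by simp
          also have "\<dots> = traj_pol f p y t"
            by (rule traj_seq_pol) (auto simp: u'_def)
          finally show ?thesis .
        qed
        have yeq: "traj_seq f u' x \<tau> = y" using pre[of \<tau>] y_def by simp
        have "l (traj_seq f u' x \<tau>) \<le> L u'" unfolding L_def
          by (rule Max_ge[OF fin_rng]) simp
        then have "l y \<le> L u'" using yeq by simp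
        moreover have "G u' \<ge> H u \<tau>"
          unfolding G_def
        proof (subst Min_ge_iff, simp add: fin_rng, simp, clarify)
          fix k
          show "H u \<tau> \<le> g (traj_seq f u' x k)"
          proof (cases "k \<le> \<tau>")
            case True
            have "Min ((\<lambda>\<kappa>. g (traj_seq f u x \<kappa>)) ` {..\<tau>}) \<le> g (traj_seq f u x k)"
              by (rule Min_le) (use True in auto)
            then show ?thesis unfolding H_def using pre[OF True] by (simp add: min.coboundedI2)
          next
            case False
            then obtain t where k: "k = \<tau> + t" by (metis le_add_diff_inverse nat_le_linear)
            have "VA f g y \<le> g (traj_pol f p y t)" unfolding p
              by (rule Min_le) (auto simp: fin_rng)
            then show ?thesis unfolding H_def ell_tilde_def k post y_def by linarith
          qed
        qed
        moreover have "H u \<tau> \<le> l y" unfolding H_def ell_tilde_def y_def by linarith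
        ultimately have "H u \<tau> \<le> min (L u') (G u')" by linarith
        also have "\<dots> \<le> Max (range (\<lambda>u. min (L u) (G u)))" by (rule Max_ge[OF finA]) auto
        finally show "H u \<tau> \<le> Max (range (\<lambda>u. min (L u) (G u)))" .
      qed
    qed
  qed
qed

end
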